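(* Let $f\in\mathcal{C}$ be differentiable on $(0,\infty)$. Let $(P,Q)$ and $(P',Q')$ be two pairs of mutually absolutely continuous probability measures ($P\ll Q\ll P$, $P'\ll Q'\ll P'$). If $E_\gamma(P\|Q)=E_\gamma(P'\|Q')$ and $E_\gamma(Q\|P)=E_\gamma(Q'\|P')$ for all $\gamma\ge1$, then $D_f(P\|Q)=D_f(P'\|Q')$. Likewise, if $\mathcal{I}_\omega(P\|Q)=\mathcal{I}_\omega(P'\|Q')$ for all $\omega\in(0,1)$, then $D_f(P\|Q)=D_f(P'\|Q')$.
   Context: $\mathcal{C}$ is the set of convex $f\colon(0,\infty)\to\mathbb{R}$ with $f(1)=0$. For densities $p,q$ w.r.t. a dominating measure $\mu$, $D_f(P\|Q):=\int qf(p/q)\,\mathrm{d}\mu$ (standard conventions at $0$). $E_\gamma(P\|Q):=\sup_U(P(U)-\gamma Q(U))$ for $\gamma\ge1$; $\mathcal{I}_\omega(P\|Q):=D_{\phi_\omega}(P\|Q)$ with $\phi_\omega(t)=\min\{\omega,1-\omega\}-\min\{\omega t,1-\omega\}$. *)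

theory Defs
  imports "HOL-Probability.Probability"
begin

definition fdiv_class :: "(real \<Rightarrow> real) \<Rightarrow> bool" where
  "fdiv_class f \<longleftrightarrow> convex_on {0<..} f \<and> f 1 = 0"

text \<open>f-divergence D_f(P||Q) = integral of q f(p/q) dmu, taken with the dominating
  measure mu = Q (so q = 1 and p = dP/dQ, the Radon-Nikodym derivative).\<close>
definition f_divergence :: "(real \<Rightarrow> real) \<Rightarrow> 'a measure \<Rightarrow> 'a measure \<Rightarrow> ereal" where
  "f_divergence f P Q =
     (enn2ereal (\<integral>\<^sup>+ x. ennreal (f (enn2real (RN_deriv Q P x))) \<partial>Q)
      - enn2ereal (\<integral>\<^sup>+ x. ennreal (- f (enn2real (RN_deriv Q P x))) \<partial>Q))"

definition E_gamma :: "real \<Rightarrow> 'a measure \<Rightarrow> 'a measure \<Rightarrow> real" where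
  "E_gamma \<gamma> P Q = (SUP U \<in> sets P. measure P U - \<gamma> * measure Q U)"

definition phi_omega :: "real \<Rightarrow> real \<Rightarrow> real" where
  "phi_omega \<omega> t = min \<omega> (1 - \<omega>) - min (\<omega> * t) (1 - \<omega>)"

definition I_omega :: "real \<Rightarrow> 'a measure \<Rightarrow> 'a measure \<Rightarrow> ereal" where
  "I_omega \<omega> P Q = f_divergence (phi_omega \<omega>) P Q"

end

theory Submission
  imports Defs
begin

lemma hinge_diff_bounds:
  fixes a h :: real assumes "0 \<le> h"
  shows "0 \<le> max 0 a - max 0 (a - h)" "max 0 a - max 0 (a - h) \<le> h"
  using assms by (auto simp: max_def)

lemma tail_limit:
  fixes M :: "real measure" and c :: real
  assumes M: "real_distribution M"
    and int0: "\<forall>d>0. integrable M (\<lambda>x. max 0 (x - d))"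
    and c: "c > 0"
  shows "(\<lambda>n. real (Suc n) * ((\<integral>x. max 0 (x - c) \<partial>M) - (\<integral>x. max 0 (x - (c + 1 / real (Suc n))) \<partial>M)))
           \<longlonglongrightarrow> measure M {c<..}"
proof -
  interpret real_distribution M by fact
  have int: "\<And>d. d > 0 \<Longrightarrow> integrable M (\<lambda>x. max 0 (x - d))" using int0 by blast
  define s where "s n x = real (Suc n) * (max 0 (x - c) - max 0 (x - (c + 1 / real (Suc n))))" for n x
  have cpos: "\<And>n. c + 1 / real (Suc n) > 0" using c by (simp add: add_pos_pos)
  have eqs: "integral\<^sup>L M (s n) = real (Suc n) * ((\<integral>x. max 0 (x - c) \<partial>M) - (\<integral>x. max 0 (x - (c + 1 / real (Suc n))) \<partial>M))" for n
    unfolding s_def using int[OF c] int[OF cpos[of n]] by (simp add: integral_diff)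
  have lim: "(\<lambda>n. integral\<^sup>L M (s n)) \<longlonglongrightarrow> integral\<^sup>L M (indicator {c<..} :: real \<Rightarrow> real)"
  proof (rule integral_dominated_convergence[where w="\<lambda>_. 1"])
    show "indicator {c<..} \<in> borel_measurable M" by simp
    show "\<And>n. s n \<in> borel_measurable M" unfolding s_def by simp
    show "integrable M (\<lambda>_. 1::real)" by simp
    show "AE x in M. (\<lambda>n. s n x) \<longlonglongrightarrow> indicator {c<..} x"
    proof (rule AE_I2)
      fix x :: real
      show "(\<lambda>n. s n x) \<longlonglongrightarrow> indicator {c<..} x"
      proof (cases "x > c")
        case True
        then obtain N where N: "inverse (real (Suc N)) < x - c"
          using reals_Archimedean[of "x - c"] True by auto
        have "eventually (\<lambda>n. s n x = 1) sequentially"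
          unfolding eventually_sequentially
        proof (intro exI allI impI)
          fix n assume "N \<le> n"
          then have i: "inverse (real (Suc n)) \<le> inverse (real (Suc N))"
            by (intro le_imp_inverse_le) auto
          have "1 / real (Suc n) < x - c" using i N unfolding divide_inverse by linarith
          then show "s n x = 1" unfolding s_def using True by (simp add: max_def field_simps)
        qed
        then show ?thesis using True by (simp add: tendsto_eventually)
      next
        case False
        have "s n x = 0" for n
        proof -
          have p: "0 < 1 / real (Suc n)" by simp
          have "x - c \<le> 0" "x - (c + 1 / real (Suc n)) \<le> 0" using False p by linarith+
          then have "max 0 (x - c) = 0" "max 0 (x - (c + 1 / real (Suc n))) = 0" by (simp_all add: max_absorb1)
          then show ?thesis unfolding s_def by simp
        qed
        then show ?thesis using False by simp
      qed
    qed
    show "AE x in M. norm (s n x) \<le> 1" for n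
    proof (rule AE_I2)
      fix x
      have h: "0 \<le> 1 / real (Suc n)" by simp
      note b = hinge_diff_bounds[OF h, of "x - c"]
      have e: "x - (c + 1 / real (Suc n)) = x - c - 1 / real (Suc n)" by simp
      have "0 \<le> s n x" unfolding s_def e using b(1) by simp
      moreover have "s n x \<le> real (Suc n) * (1 / real (Suc n))" unfolding s_def e
        using b(2) by (intro mult_left_mono) auto
      ultimately show "norm (s n x) \<le> 1" by simp
    qed
  qed
  have "integral\<^sup>L M (indicator {c<..} :: real \<Rightarrow> real) = measure M {c<..}" by simp
  with lim eqs show ?thesis by simp
qed

lemma cdf_pos_part:
  fixes M :: "real measure"
  assumes M: "real_distribution M" and z: "measure M {..0} = 0"
  shows "cdf M x = (if x \<le> 0 then 0 else 1 - measure M {x<..})"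
proof -
  interpret real_distribution M by fact
  show ?thesis
  proof (cases "x \<le> 0")
    case True
    have "measure M {..x} \<le> measure M {..0}"
      using True by (intro finite_measure_mono) auto
    then have "measure M {..x} = 0" using z measure_nonneg[of M "{..x}"] by linarith
    then show ?thesis using True by (simp add: cdf_def)
  next
    case False
    have "{..x} = space M - {x<..}" by auto
    then have "measure M {..x} = 1 - measure M {x<..}"
      using prob_compl[of "{x<..}"] by simp
    then show ?thesis using False by (simp add: cdf_def)
  qed
qed

lemma hinge_unique:
  fixes \<mu> \<nu> :: "real measure"
  assumes mu: "real_distribution \<mu>" and nu: "real_distribution \<nu>"
    and z1: "measure \<mu> {..0} = 0" and z2: "measure \<nu> {..0} = 0"
    and i1: "\<And>d. d > 0 \<Longrightarrow> integrable \<mu> (\<lambda>x. max 0 (x - d))"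
    and i2: "\<And>d. d > 0 \<Longrightarrow> integrable \<nu> (\<lambda>x. max 0 (x - d))"
    and eq: "\<And>d. d > 0 \<Longrightarrow> (\<integral>x. max 0 (x - d) \<partial>\<mu>) = (\<integral>x. max 0 (x - d) \<partial>\<nu>)"
  shows "\<mu> = \<nu>"
proof -
  have i1': "\<forall>d>0. integrable \<mu> (\<lambda>x. max 0 (x - d))" using i1 by blast
  have i2': "\<forall>d>0. integrable \<nu> (\<lambda>x. max 0 (x - d))" using i2 by blast
  show ?thesis
proof (rule cdf_unique[OF mu nu], rule ext)
  fix x :: real
  show "cdf \<mu> x = cdf \<nu> x"
  proof (cases "x \<le> 0")
    case True
    then show ?thesis using cdf_pos_part[OF mu z1] cdf_pos_part[OF nu z2] by simp
  next
    case False
    then have x: "x > 0" by simp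
    have cpos: "\<And>n. x + 1 / real (Suc n) > 0" using x by (simp add: add_pos_pos)
    have t: "(\<lambda>n. real (Suc n) * ((\<integral>y. max 0 (y - x) \<partial>\<nu>) - (\<integral>y. max 0 (y - (x + 1 / real (Suc n))) \<partial>\<nu>)))
           \<longlonglongrightarrow> measure \<mu> {x<..}"
      using tail_limit[OF mu i1' x] unfolding eq[OF x] eq[OF cpos] .
    have "measure \<mu> {x<..} = measure \<nu> {x<..}"
      using LIMSEQ_unique[OF t tail_limit[OF nu i2' x]] .
    then show ?thesis using cdf_pos_part[OF mu z1] cdf_pos_part[OF nu z2] by simp
  qed
qed
qed


lemma enn2ereal_fin: "x < \<top> \<Longrightarrow> enn2ereal x = ereal (enn2real x)"
  by (cases x rule: ennreal_cases) auto

locale mpair = P: prob_space P + Q: prob_space Q for P Q :: "'a measure" +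
  assumes sPQ: "sets P = sets Q" and acPQ: "absolutely_continuous Q P"
    and acQP: "absolutely_continuous P Q"
begin

definition L :: "'a \<Rightarrow> real" where "L x = enn2real (RN_deriv Q P x)"

lemma L_meas[measurable]: "L \<in> borel_measurable Q"
  unfolding L_def by simp

lemma L_nonneg: "0 \<le> L x"
  unfolding L_def by simp

lemma sfP: "sigma_finite_measure P" by unfold_locales

lemma int_P:
  assumes g: "g \<in> borel_measurable Q"
  shows "integrable P g \<longleftrightarrow> integrable Q (\<lambda>x. L x * g x)"
    and "integral\<^sup>L P g = (\<integral>x. L x * g x \<partial>Q)"
  unfolding L_def
  using Q.RN_deriv_integrable[OF sfP acPQ sPQ g] Q.RN_deriv_integral[OF sfP acPQ sPQ g] by auto

lemma L_int: "integrable Q L" and L_integral: "(\<integral>x. L x \<partial>Q) = 1"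
  using int_P[of "\<lambda>_. 1"] P.prob_space by auto

lemma intLU: "U \<in> sets Q \<Longrightarrow> integrable Q (\<lambda>x. L x * indicator U x)"
  using integrable_mult_indicator[of U Q L] L_int by (simp add: mult.commute)

lemma intU: "U \<in> sets Q \<Longrightarrow> integrable Q (indicator U :: 'a \<Rightarrow> real)"
  by (rule integrable_real_indicator) (auto simp: less_top[symmetric])

lemma intUf: "U \<in> sets Q \<Longrightarrow> integrable Q f \<Longrightarrow> integrable Q (\<lambda>x. indicator U x * f x :: real)"
  using integrable_mult_indicator[of U Q f] by simp

lemma L_pos: "AE x in Q. 0 < L x"
proof -
  obtain D where D: "D \<in> borel_measurable Q" "AE x in Q. RN_deriv Q P x = ennreal (D x)"
    "AE x in P. 0 < D x" "\<And>x. 0 \<le> D x"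
    using Q.real_RN_deriv[OF _ acPQ sPQ] P.finite_measure_axioms by blast
  have "AE x in P. RN_deriv Q P x = ennreal (D x)"
    using absolutely_continuous_AE[OF sPQ acPQ D(2)] .
  with D(3) have "AE x in P. 0 < L x"
    by eventually_elim (simp add: L_def D(4))
  then show ?thesis
    using absolutely_continuous_AE[OF sPQ[symmetric] acQP] by blast
qed

lemma measure_P: "A \<in> sets Q \<Longrightarrow> measure P A = (\<integral>x. L x * indicator A x \<partial>Q)"
  using int_P(2)[of "indicator A"] sPQ by simp

lemma E1: "E_gamma \<gamma> P Q = (\<integral>x. max 0 (L x - \<gamma>) \<partial>Q)"
proof -
  have ib: "integrable Q (\<lambda>x. max 0 (L x - \<gamma>))" using L_int by auto
  have rep: "measure P U - \<gamma> * measure Q U = (\<integral>x. indicator U x * (L x - \<gamma>) \<partial>Q)"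
    if U: "U \<in> sets Q" for U
  proof -
    have "(\<integral>x. indicator U x * (L x - \<gamma>) \<partial>Q) = (\<integral>x. L x * indicator U x - \<gamma> * indicator U x \<partial>Q)"
      by (rule Bochner_Integration.integral_cong) (auto simp: algebra_simps)
    also have "\<dots> = (\<integral>x. L x * indicator U x \<partial>Q) - \<gamma> * measure Q U"
      using U L_int by (subst Bochner_Integration.integral_diff) (auto intro!: intLU intU)
    finally show ?thesis using measure_P[OF U] by simp
  qed
  define U0 where "U0 = {x \<in> space Q. \<gamma> < L x}"
  have U0: "U0 \<in> sets Q" unfolding U0_def by measurable
  show ?thesis
    unfolding E_gamma_def
  proof (rule cSup_eq_maximum)
    show "(\<integral>x. max 0 (L x - \<gamma>) \<partial>Q) \<in> (\<lambda>U. measure P U - \<gamma> * measure Q U) ` sets P"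
    proof
      show "U0 \<in> sets P" using U0 sPQ by simp
      show "(\<integral>x. max 0 (L x - \<gamma>) \<partial>Q) = measure P U0 - \<gamma> * measure Q U0"
        unfolding rep[OF U0]
        by (rule Bochner_Integration.integral_cong) (auto simp: U0_def indicator_def max_def)
    qed
    fix y assume "y \<in> (\<lambda>U. measure P U - \<gamma> * measure Q U) ` sets P"
    then obtain U where U: "U \<in> sets Q" and y: "y = measure P U - \<gamma> * measure Q U"
      using sPQ by auto
    show "y \<le> (\<integral>x. max 0 (L x - \<gamma>) \<partial>Q)"
      unfolding y rep[OF U]
      using U ib L_int intUf[OF U, of "\<lambda>x. L x - \<gamma>"] intUf[OF U, of "\<lambda>x. 1 - \<gamma> * L x"]
      by (intro integral_mono) (auto simp: indicator_def)
  qed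
qed

lemma E2: "E_gamma \<gamma> Q P = (\<integral>x. max 0 (1 - \<gamma> * L x) \<partial>Q)"
proof -
  have ib: "integrable Q (\<lambda>x. max 0 (1 - \<gamma> * L x))" using L_int by auto
  have rep: "measure Q U - \<gamma> * measure P U = (\<integral>x. indicator U x * (1 - \<gamma> * L x) \<partial>Q)"
    if U: "U \<in> sets Q" for U
  proof -
    have "(\<integral>x. indicator U x * (1 - \<gamma> * L x) \<partial>Q) = (\<integral>x. indicator U x - \<gamma> * (L x * indicator U x) \<partial>Q)"
      by (rule Bochner_Integration.integral_cong) (auto simp: algebra_simps)
    also have "\<dots> = measure Q U - \<gamma> * (\<integral>x. L x * indicator U x \<partial>Q)"
      using U L_int by (subst Bochner_Integration.integral_diff) (auto intro!: intLU intU)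
    finally show ?thesis using measure_P[OF U] by simp
  qed
  define U0 where "U0 = {x \<in> space Q. \<gamma> * L x < 1}"
  have U0: "U0 \<in> sets Q" unfolding U0_def by measurable
  show ?thesis
    unfolding E_gamma_def
  proof (rule cSup_eq_maximum)
    show "(\<integral>x. max 0 (1 - \<gamma> * L x) \<partial>Q) \<in> (\<lambda>U. measure Q U - \<gamma> * measure P U) ` sets Q"
    proof
      show "U0 \<in> sets Q" using U0 by simp
      show "(\<integral>x. max 0 (1 - \<gamma> * L x) \<partial>Q) = measure Q U0 - \<gamma> * measure P U0"
        unfolding rep[OF U0]
        by (rule Bochner_Integration.integral_cong) (auto simp: U0_def indicator_def max_def)
    qed
    fix y assume "y \<in> (\<lambda>U. measure Q U - \<gamma> * measure P U) ` sets Q"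
    then obtain U where U: "U \<in> sets Q" and y: "y = measure Q U - \<gamma> * measure P U"
      by auto
    show "y \<le> (\<integral>x. max 0 (1 - \<gamma> * L x) \<partial>Q)"
      unfolding y rep[OF U]
      using U ib L_int intUf[OF U, of "\<lambda>x. L x - \<gamma>"] intUf[OF U, of "\<lambda>x. 1 - \<gamma> * L x"]
      by (intro integral_mono) (auto simp: indicator_def)
  qed
qed

definition G :: "real \<Rightarrow> real" where "G c = (\<integral>x. max 0 (L x - c) \<partial>Q)"

lemma G_E2:
  assumes c: "c > 0"
  shows "G c = 1 - c + c * E_gamma (1 / c) Q P"
proof -
  have "c * E_gamma (1 / c) Q P = (\<integral>x. c * max 0 (1 - 1 / c * L x) \<partial>Q)"
    unfolding E2 by simp
  also have "\<dots> = (\<integral>x. max 0 (c - L x) \<partial>Q)"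
  proof (rule Bochner_Integration.integral_cong)
    fix x
    have "c * max 0 (1 - 1 / c * L x) = max (c * 0) (c * (1 - 1 / c * L x))"
      using c by (simp add: max_mult_distrib_left)
    also have "c * (1 - 1 / c * L x) = c - L x" using c by (simp add: field_simps)
    finally show "c * max 0 (1 - 1 / c * L x) = max 0 (c - L x)" by simp
  qed simp
  finally have e: "c * E_gamma (1 / c) Q P = (\<integral>x. max 0 (c - L x) \<partial>Q)" .
  have "G c = (\<integral>x. L x - c + max 0 (c - L x) \<partial>Q)"
    unfolding G_def by (rule Bochner_Integration.integral_cong) (auto simp: max_def)
  also have "\<dots> = (\<integral>x. L x \<partial>Q) - c + (\<integral>x. max 0 (c - L x) \<partial>Q)"
    using L_int by (simp add: Bochner_Integration.integral_diff Bochner_Integration.integral_add Q.prob_space)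
  finally show ?thesis using e L_integral by simp
qed

lemma fdiv_integrable:
  assumes "integrable Q (\<lambda>x. g (L x))"
  shows "f_divergence g P Q = ereal (\<integral>x. g (L x) \<partial>Q)"
proof -
  have a: "(\<integral>\<^sup>+ x. ennreal (g (L x)) \<partial>Q) < \<infinity>" "(\<integral>\<^sup>+ x. ennreal (- g (L x)) \<partial>Q) < \<infinity>"
  proof -
    have b: "(\<integral>\<^sup>+ x. ennreal \<bar>g (L x)\<bar> \<partial>Q) < \<infinity>"
      using assms by (simp add: integrable_iff_bounded)
    have "(\<integral>\<^sup>+ x. ennreal (g (L x)) \<partial>Q) \<le> (\<integral>\<^sup>+ x. ennreal \<bar>g (L x)\<bar> \<partial>Q)"
      by (intro nn_integral_mono ennreal_leI) simp
    moreover have "(\<integral>\<^sup>+ x. ennreal (- g (L x)) \<partial>Q) \<le> (\<integral>\<^sup>+ x. ennreal \<bar>g (L x)\<bar> \<partial>Q)"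
      by (intro nn_integral_mono ennreal_leI) simp
    ultimately show "(\<integral>\<^sup>+ x. ennreal (g (L x)) \<partial>Q) < \<infinity>" "(\<integral>\<^sup>+ x. ennreal (- g (L x)) \<partial>Q) < \<infinity>"
      using b by (auto intro: le_less_trans)
  qed
  show ?thesis
    unfolding f_divergence_def L_def[symmetric] real_lebesgue_integral_def[OF assms]
    using a by (simp add: enn2ereal_fin)
qed

lemma I_G:
  assumes w: "0 < \<omega>" "\<omega> < 1"
  shows "I_omega \<omega> P Q = ereal (min \<omega> (1 - \<omega>) - \<omega> + \<omega> * G ((1 - \<omega>) / \<omega>))"
proof -
  define c where "c = (1 - \<omega>) / \<omega>"
  have pw: "phi_omega \<omega> (L x) = min \<omega> (1 - \<omega>) - \<omega> * L x + \<omega> * max 0 (L x - c)" for x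
  proof -
    have "\<omega> * max 0 (L x - c) = max (\<omega> * 0) (\<omega> * (L x - c))"
      using w by (simp add: max_mult_distrib_left)
    also have "\<omega> * (L x - c) = \<omega> * L x - (1 - \<omega>)" using w by (simp add: c_def field_simps)
    finally show ?thesis unfolding phi_omega_def by (simp add: max_def min_def)
  qed
  have ib: "integrable Q (\<lambda>x. phi_omega \<omega> (L x))"
  proof (rule Q.integrable_const_bound[where B=1])
    show "AE x in Q. norm (phi_omega \<omega> (L x)) \<le> 1"
    proof (intro AE_I2)
      fix x
      have "0 \<le> \<omega> * L x" using w L_nonneg[of x] by simp
      then show "norm (phi_omega \<omega> (L x)) \<le> 1" using w by (auto simp: phi_omega_def min_def)
    qed
    show "(\<lambda>x. phi_omega \<omega> (L x)) \<in> borel_measurable Q"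
      unfolding phi_omega_def by measurable
  qed
  have "(\<integral>x. phi_omega \<omega> (L x) \<partial>Q) = (\<integral>x. min \<omega> (1 - \<omega>) - \<omega> * L x + \<omega> * max 0 (L x - c) \<partial>Q)"
    using pw by simp
  also have "\<dots> = min \<omega> (1 - \<omega>) - \<omega> * (\<integral>x. L x \<partial>Q) + \<omega> * G c"
    unfolding G_def using L_int
    by (simp add: Bochner_Integration.integral_diff Bochner_Integration.integral_add Q.prob_space)
  finally show ?thesis
    unfolding I_omega_def fdiv_integrable[OF ib] using L_integral by (simp add: c_def)
qed

definition mu :: "real measure" where "mu = distr Q borel L"

lemma mu_dist: "real_distribution mu"
  unfolding mu_def real_distribution_def real_distribution_axioms_def
  by (auto intro!: Q.prob_space_distr)

lemma mu_zero: "measure mu {..0} = 0"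
proof -
  have "measure mu {..0} = measure Q (L -` {..0} \<inter> space Q)"
    unfolding mu_def by (simp add: measure_distr)
  also have "L -` {..0} \<inter> space Q = {x \<in> space Q. \<not> 0 < L x}" by auto
  also have "measure Q \<dots> = 0"
    using L_pos by (subst (asm) AE_iff_measurable[OF _ refl]) (auto simp: measure_def)
  finally show ?thesis .
qed

lemma mu_int: "integrable mu (\<lambda>x. max 0 (x - d))"
  unfolding mu_def using L_int by (subst integrable_distr_eq) auto

lemma mu_G: "(\<integral>x. max 0 (x - d) \<partial>mu) = G d"
  unfolding mu_def G_def by (subst integral_distr) auto

lemma fdiv_mu:
  assumes f0: "f0 \<in> borel_measurable borel" and eq: "\<And>x. x > 0 \<Longrightarrow> f0 x = f x"
  shows "f_divergence f P Q = enn2ereal (\<integral>\<^sup>+ y. ennreal (f0 y) \<partial>mu) - enn2ereal (\<integral>\<^sup>+ y. ennreal (- f0 y) \<partial>mu)"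
proof -
  have "(\<integral>\<^sup>+ y. ennreal (f0 y) \<partial>mu) = (\<integral>\<^sup>+ x. ennreal (f0 (L x)) \<partial>Q)"
    unfolding mu_def using f0 by (subst nn_integral_distr) auto
  also have "\<dots> = (\<integral>\<^sup>+ x. ennreal (f (L x)) \<partial>Q)"
    using L_pos by (intro nn_integral_cong_AE) (auto simp: eq)
  finally have 1: "(\<integral>\<^sup>+ y. ennreal (f0 y) \<partial>mu) = (\<integral>\<^sup>+ x. ennreal (f (L x)) \<partial>Q)" .
  have "(\<integral>\<^sup>+ y. ennreal (- f0 y) \<partial>mu) = (\<integral>\<^sup>+ x. ennreal (- f0 (L x)) \<partial>Q)"
    unfolding mu_def using f0 by (subst nn_integral_distr) auto
  also have "\<dots> = (\<integral>\<^sup>+ x. ennreal (- f (L x)) \<partial>Q)"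
    using L_pos by (intro nn_integral_cong_AE) (auto simp: eq)
  finally have 2: "(\<integral>\<^sup>+ y. ennreal (- f0 y) \<partial>mu) = (\<integral>\<^sup>+ x. ennreal (- f (L x)) \<partial>Q)" .
  show ?thesis unfolding f_divergence_def L_def[symmetric] 1 2 ..
qed

end

theorem corollary1:
  fixes f :: "real \<Rightarrow> real"
    and P Q :: "'a measure" and P' Q' :: "'b measure"
  assumes fC: "fdiv_class f"
    and fdiff: "\<forall>x>0. f differentiable (at x)"
    and P: "prob_space P" and Q: "prob_space Q" and sPQ: "sets P = sets Q"
    and acPQ: "absolutely_continuous Q P" and acQP: "absolutely_continuous P Q"
    and P': "prob_space P'" and Q': "prob_space Q'" and sPQ': "sets P' = sets Q'"
    and acPQ': "absolutely_continuous Q' P'" and acQP': "absolutely_continuous P' Q'"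
  shows "((\<forall>\<gamma>\<ge>1. E_gamma \<gamma> P Q = E_gamma \<gamma> P' Q' \<and> E_gamma \<gamma> Q P = E_gamma \<gamma> Q' P')
            \<longrightarrow> f_divergence f P Q = f_divergence f P' Q')
       \<and> ((\<forall>\<omega>\<in>{0<..<1}. I_omega \<omega> P Q = I_omega \<omega> P' Q')
            \<longrightarrow> f_divergence f P Q = f_divergence f P' Q')"
proof -
  interpret A: mpair P Q
    using P Q sPQ acPQ acQP by (simp add: mpair_def mpair_axioms_def)
  interpret B: mpair P' Q'
    using P' Q' sPQ' acPQ' acQP' by (simp add: mpair_def mpair_axioms_def)
  define f0 where "f0 x = (if x \<in> {0<..} then f x else 0)" for x :: real
  have cont: "continuous_on {0<..} f"
    using fdiff by (intro continuous_at_imp_continuous_on ballI differentiable_imp_continuous_within) auto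
  have f0m: "f0 \<in> borel_measurable borel"
    unfolding f0_def by (rule borel_measurable_continuous_on_if) (auto simp: cont continuous_on_const)
  have f0e: "\<And>x. x > 0 \<Longrightarrow> f0 x = f x" by (simp add: f0_def)
  have key: "f_divergence f P Q = f_divergence f P' Q'" if GG: "\<And>c. c > 0 \<Longrightarrow> A.G c = B.G c"
  proof -
    have "A.mu = B.mu"
      by (rule hinge_unique[OF A.mu_dist B.mu_dist A.mu_zero B.mu_zero A.mu_int B.mu_int])
        (simp add: A.mu_G B.mu_G GG)
    then show ?thesis using A.fdiv_mu[OF f0m f0e] B.fdiv_mu[OF f0m f0e] by simp
  qed
  show ?thesis
  proof (intro conjI impI)
    assume H: "\<forall>\<gamma>\<ge>1. E_gamma \<gamma> P Q = E_gamma \<gamma> P' Q' \<and> E_gamma \<gamma> Q P = E_gamma \<gamma> Q' P'"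
    show "f_divergence f P Q = f_divergence f P' Q'"
    proof (rule key)
      fix c :: real assume c: "c > 0"
      show "A.G c = B.G c"
      proof (cases "c \<ge> 1")
        case True
        then show ?thesis using H A.E1[of c] B.E1[of c] by (simp add: A.G_def B.G_def)
      next
        case False
        then have "1 / c \<ge> 1" using c by (simp add: field_simps)
        then show ?thesis using H A.G_E2[OF c] B.G_E2[OF c] by simp
      qed
    qed
  next
    assume H: "\<forall>\<omega>\<in>{0<..<1}. I_omega \<omega> P Q = I_omega \<omega> P' Q'"
    show "f_divergence f P Q = f_divergence f P' Q'"
    proof (rule key)
      fix c :: real assume c: "c > 0"
      define \<omega> where "\<omega> = 1 / (1 + c)"
      have w: "0 < \<omega>" "\<omega> < 1" using c by (auto simp: \<omega>_def field_simps)
      have cw: "(1 - \<omega>) / \<omega> = c" using c by (simp add: \<omega>_def field_simps)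
      have "I_omega \<omega> P Q = I_omega \<omega> P' Q'" using H w by auto
      then have "\<omega> * A.G c = \<omega> * B.G c"
        unfolding A.I_G[OF w] B.I_G[OF w] cw by simp
      then show "A.G c = B.G c" using w by simp
    qed
  qed
qed

end
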